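(* $\mathbb E\big[\widetilde V^{\textsc{off}}_1[\omega_1]\big]\le\mathbb E\big[V^{\textsc{off}}[\omega]\big]+O\big(K^{3/2}\sqrt T\big)$.
   Context: Model. There are $m$ resources and $n$ arrival types; type $j$ has cost vector $c_j\in\mathbb R^m$ and allowed resources $\mathcal S_j\subseteq[m]$, $\max_{i,j}|c_{ji}|<\infty$. The horizon has $T$ periods partitioned into $K=\Theta(1)$ epochs ($T$ a multiple of $K$), epoch $k$ being periods $(k-1)T/K+1,\dots,kT/K$. In period $t$ one arrival of type $j^t$ occurs, $j^1,\dots,j^T$ i.i.d. with $\mathbb P(j^t=j)=p_j$, $p$ not depending on $T$; $\omega=(j^t)_{t\le T}$, $\omega_1=(j^t)_{t\le T/K}$, $\Lambda_j(t_1:t_2)=\sum_{t_1<\tau\le t_2}\mathbf 1\{j^\tau=j\}$. Each epoch $k$ and resource $i$ has a target $\rho_{ki}\in[0,1]$ and a convex $L$-Lipschitz $g_{ki}:[0,1]\to\mathbb R_{\ge0}$ with $g_{ki}(\rho_{ki})=0$. $O(\cdot)$ is as $T\to\infty$ with hidden constants depending only on $m,n,c,L,p$. Offline benchmark: $V^{\textsc{off}}[\omega]$ is the minimum over nonnegative integers $Z_{ji}(kT/K)$ ($Z_{ji}(0)=0$; write $Z(t_1:t_2)=Z(t_2)-Z(t_1)$, $Z_i=\sum_jZ_{ji}$) subject to $\sum_iZ_{ji}((k-1)T/K:kT/K)\le\Lambda_j((k-1)T/K:kT/K)$ for all $j,k$ and $Z_{ji}(T)=0$ for $i\notin\mathcal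 S_j$, of $\sum_{j,i}c_{ji}Z_{ji}(T)+\frac TK\sum_k\sum_ik\,g_{ki}\big(Z_i(kT/K)/(kT/K)\big)$. Proxy offline optimum for epoch 1: $\widetilde V^{\textsc{off}}_1[\omega_1]$ is the minimum over nonnegative integers $Z^{(k)}_{ji}$ ($j\in[n],i\in[m],k\in[K]$) with $Z^{(k)}_{ji}=0$ for $i\notin\mathcal S_j$ and $\sum_iZ^{(k)}_{ji}\le\Lambda_j(0:T/K)$ for all $j,k$, of $$\sum_{j,i}c_{ji}\sum_{k}Z^{(k)}_{ji}+\frac TK\sum_{k\in[K]}\sum_ik\,g_{ki}\Big(\frac{\sum_j\sum_{k''=1}^{k}Z^{(k'')}_{ji}}{kT/K}\Big),$$ i.e. the offline problem in which every epoch is assumed to have the same arrival counts as epoch 1. *)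

theory Defs
  imports "HOL-Probability.Probability"
begin

text \<open>Types are indexed by j < n, resources by i < m, epochs by k in {1..K},
  periods by t in {1..T}.  An arrival sequence is omega :: nat => nat,
  omega t being the type of the arrival in period t.  Allocations are described
  by per-epoch increments X k j i (nonnegative integers), so that the cumulative
  allocation Z_ji(kT/K) is the sum of X k'' j i over k'' = 1..k.\<close>

definition arrivals :: "(nat \<Rightarrow> nat) \<Rightarrow> nat \<Rightarrow> nat \<Rightarrow> nat \<Rightarrow> nat" where
  "arrivals \<omega> j t1 t2 = card {t \<in> {t1<..t2}. \<omega> t = j}"

definition alloc_obj ::
  "nat \<Rightarrow> nat \<Rightarrow> (nat \<Rightarrow> nat \<Rightarrow> real) \<Rightarrow> nat \<Rightarrow> nat \<Rightarrow>
   (nat \<Rightarrow> nat \<Rightarrow> real \<Rightarrow> real) \<Rightarrow> (nat \<Rightarrow> nat \<Rightarrow> nat \<Rightarrow> nat) \<Rightarrow> real" where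
  "alloc_obj n m c K T g X =
     (\<Sum>j<n. \<Sum>i<m. c j i * real (\<Sum>k\<in>{1..K}. X k j i))
     + real T / real K *
       (\<Sum>k\<in>{1..K}. \<Sum>i<m. real k *
          g k i (real (\<Sum>j<n. \<Sum>k''\<in>{1..k}. X k'' j i) / (real k * real T / real K)))"

definition supp_ok :: "nat \<Rightarrow> nat \<Rightarrow> (nat \<Rightarrow> nat set) \<Rightarrow> nat \<Rightarrow> (nat \<Rightarrow> nat \<Rightarrow> nat \<Rightarrow> nat) \<Rightarrow> bool" where
  "supp_ok n m S K X \<longleftrightarrow> (\<forall>k j i. X k j i \<noteq> 0 \<longrightarrow> k \<in> {1..K} \<and> j < n \<and> i < m \<and> i \<in> S j)"

definition V_off ::
  "nat \<Rightarrow> nat \<Rightarrow> (nat \<Rightarrow> nat \<Rightarrow> real) \<Rightarrow> (nat \<Rightarrow> nat set) \<Rightarrow> nat \<Rightarrow> nat \<Rightarrow>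
   (nat \<Rightarrow> nat \<Rightarrow> real \<Rightarrow> real) \<Rightarrow> (nat \<Rightarrow> nat) \<Rightarrow> real" where
  "V_off n m c S K T g \<omega> = Inf (alloc_obj n m c K T g ` {X. supp_ok n m S K X \<and>
      (\<forall>k\<in>{1..K}. \<forall>j<n. (\<Sum>i<m. X k j i) \<le> arrivals \<omega> j ((k - 1) * (T div K)) (k * (T div K)))})"

definition V_proxy1 ::
  "nat \<Rightarrow> nat \<Rightarrow> (nat \<Rightarrow> nat \<Rightarrow> real) \<Rightarrow> (nat \<Rightarrow> nat set) \<Rightarrow> nat \<Rightarrow> nat \<Rightarrow>
   (nat \<Rightarrow> nat \<Rightarrow> real \<Rightarrow> real) \<Rightarrow> (nat \<Rightarrow> nat) \<Rightarrow> real" where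
  "V_proxy1 n m c S K T g \<omega> = Inf (alloc_obj n m c K T g ` {X. supp_ok n m S K X \<and>
      (\<forall>k\<in>{1..K}. \<forall>j<n. (\<Sum>i<m. X k j i) \<le> arrivals \<omega> j 0 (T div K))})"

text \<open>Law of omega = (j^1,...,j^T): i.i.d. with distribution P (values outside {1..T} are 0).\<close>
definition arrival_law :: "nat pmf \<Rightarrow> nat \<Rightarrow> (nat \<Rightarrow> nat) pmf" where
  "arrival_law P T = Pi_pmf {1..T} 0 (\<lambda>_. P)"

end

theory Submission
  imports Defs
begin


lemma fin_law: assumes "finite (set_pmf P)" shows "finite (set_pmf (arrival_law P T))"
  unfolding arrival_law_def using assms by (auto simp: set_Pi_pmf intro!: finite_PiE_dflt)

lemma integ_law: fixes f :: "(nat \<Rightarrow> nat) \<Rightarrow> real" assumes "finite (set_pmf P)" shows "integrable (measure_pmf (arrival_law P T)) f"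
  using fin_law[OF assms] by (rule integrable_measure_pmf_finite)

lemma exp_ind: "measure_pmf.expectation P (\<lambda>y. if y = j then 1 else 0 :: real) = pmf P j"
proof -
  have "(\<lambda>y. if y = j then 1 else 0 :: real) = indicator {j}" by (auto simp: indicator_def)
  then show ?thesis by (simp add: measure_pmf_single)
qed

lemma pair_expect:
  assumes fin: "finite (set_pmf P)" and uv: "u \<in> {1..T}" "v \<in> {1..T}" "u \<noteq> v"
  shows "measure_pmf.expectation (arrival_law P T)
     (\<lambda>\<omega>. (if \<omega> u = j then 1 else 0) * (if \<omega> v = j then 1 else 0) :: real) = (pmf P j) * pmf P j"
proof -
  define f where "f = (\<lambda>x y. if x = u \<or> x = v then (if y = j then 1 else 0) else 1 :: real)"
  have set: "{x\<in>{1..T}. x = u \<or> x = v} = {u,v}" using uv by auto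
  have pw: "(\<Prod>x\<in>{1..T}. f x (\<omega> x)) = (if \<omega> u = j then 1 else 0) * (if \<omega> v = j then 1 else 0)" for \<omega>
  proof -
    have "(\<Prod>x\<in>{1..T}. f x (\<omega> x)) = (\<Prod>x\<in>{x\<in>{1..T}. x = u \<or> x = v}. (if \<omega> x = j then 1 else 0))"
      unfolding f_def by (subst prod.inter_filter) auto
    also have "\<dots> = (if \<omega> u = j then 1 else 0) * (if \<omega> v = j then 1 else 0)"
      unfolding set using uv by simp
    finally show ?thesis .
  qed
  have "measure_pmf.expectation (arrival_law P T)
     (\<lambda>\<omega>. (if \<omega> u = j then 1 else 0) * (if \<omega> v = j then 1 else 0) :: real)
     = measure_pmf.expectation (arrival_law P T) (\<lambda>\<omega>. \<Prod>x\<in>{1..T}. f x (\<omega> x))"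
    by (simp only: pw)
  also have "\<dots> = (\<Prod>x\<in>{1..T}. measure_pmf.expectation P (f x))"
    unfolding arrival_law_def
    by (rule expectation_prod_Pi_pmf) (auto simp: f_def intro: integrable_measure_pmf_finite fin)
  also have "\<dots> = (\<Prod>x\<in>{x\<in>{1..T}. x = u \<or> x = v}. measure_pmf.expectation P (\<lambda>y. if y = j then 1 else 0 :: real))"
    unfolding f_def by (subst prod.inter_filter) (auto intro!: prod.cong)
  also have "\<dots> = pmf P j * pmf P j" unfolding set using uv by (simp add: exp_ind)
  finally show ?thesis .
qed

definition yind :: "nat \<Rightarrow> nat \<Rightarrow> (nat \<Rightarrow> nat) \<Rightarrow> real" where
  "yind j t \<omega> = (if \<omega> t = j then 1 else 0)"

lemma pair_ind:
  assumes fin: "finite (set_pmf P)" and uv: "u \<in> {1..T}" "v \<in> {1..T}" "u \<noteq> v"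
  shows "measure_pmf.expectation (arrival_law P T) (\<lambda>\<omega>. yind j u \<omega> * yind j v \<omega>) = pmf P j * pmf P j"
  unfolding yind_def using pair_expect[OF assms] .

lemma sq_bound:
  assumes fin: "finite (set_pmf P)" and k: "2 \<le> k" "k \<le> K" and Ks: "K * d = T"
  shows "measure_pmf.expectation (arrival_law P T)
     (\<lambda>\<omega>. (\<Sum>t\<in>{1..d}. yind j (t + (k-1)*d) \<omega> - yind j t \<omega>)^2) \<le> real d"
proof -
  let ?M = "measure_pmf (arrival_law P T)"
  define Z where "Z t \<omega> = yind j (t + (k-1)*d) \<omega> - yind j t \<omega>" for t \<omega>
  have I: "integrable ?M f" for f :: "_ \<Rightarrow> real" by (rule integ_law[OF fin])
  have sq: "(\<Sum>t\<in>{1..d}. Z t \<omega>)^2 = (\<Sum>t\<in>{1..d}. \<Sum>t'\<in>{1..d}. Z t \<omega> * Z t' \<omega>)" for \<omega>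
    by (simp add: power2_eq_square sum_product)
  have "measure_pmf.expectation (arrival_law P T) (\<lambda>\<omega>. (\<Sum>t\<in>{1..d}. Z t \<omega>)^2)
     = (\<Sum>t\<in>{1..d}. \<Sum>t'\<in>{1..d}. measure_pmf.expectation (arrival_law P T) (\<lambda>\<omega>. Z t \<omega> * Z t' \<omega>))"
    unfolding sq by (simp add: Bochner_Integration.integral_sum I)
  also have "\<dots> \<le> (\<Sum>t\<in>{1..d}. \<Sum>t'\<in>{1..d}. (if t = t' then 1 else 0))"
  proof (intro sum_mono)
    fix t t' assume t: "t \<in> {1..d}" and t': "t' \<in> {1..d}"
    have kk: "t + (k-1)*d \<le> T" "t' + (k-1)*d \<le> T" "d \<le> (k-1)*d"
      using t t' k Ks 
      by (auto intro!: order.trans[OF _ mult_le_mono1[OF \<open>k \<le> K\<close>]]) (simp_all add: algebra_simps)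
    show "measure_pmf.expectation (arrival_law P T) (\<lambda>\<omega>. Z t \<omega> * Z t' \<omega>) \<le> (if t = t' then 1 else 0)"
    proof (cases "t = t'")
      case True
      have "measure_pmf.expectation (arrival_law P T) (\<lambda>\<omega>. Z t \<omega> * Z t' \<omega>) 
          \<le> measure_pmf.expectation (arrival_law P T) (\<lambda>\<omega>. 1)"
        by (rule integral_mono[OF I I]) (auto simp: Z_def yind_def True)
      then show ?thesis using True by simp
    next
      case False
      let ?a = "t + (k-1)*d" and ?c = "t' + (k-1)*d"
      have e: "Z t \<omega> * Z t' \<omega> = (yind j ?a \<omega> * yind j ?c \<omega> - yind j ?a \<omega> * yind j t' \<omega>)
          + (yind j t \<omega> * yind j t' \<omega> - yind j t \<omega> * yind j ?c \<omega>)" for \<omega>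
        by (simp add: Z_def algebra_simps)
      have "measure_pmf.expectation (arrival_law P T) (\<lambda>\<omega>. Z t \<omega> * Z t' \<omega>) =
        (measure_pmf.expectation (arrival_law P T) (\<lambda>\<omega>. yind j ?a \<omega> * yind j ?c \<omega>)
         - measure_pmf.expectation (arrival_law P T) (\<lambda>\<omega>. yind j ?a \<omega> * yind j t' \<omega>))
        + (measure_pmf.expectation (arrival_law P T) (\<lambda>\<omega>. yind j t \<omega> * yind j t' \<omega>)
         - measure_pmf.expectation (arrival_law P T) (\<lambda>\<omega>. yind j t \<omega> * yind j ?c \<omega>))"
        unfolding e by (simp add: I)
      also have "\<dots> = 0"
      proof -
        have d1: "1 \<le> d" using t by simp
        have b: "1 \<le> t" "t \<le> d" "1 \<le> t'" "t' \<le> d" using t t' by auto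
        have "t + (k-1)*d \<noteq> t'" using b kk(3) by linarith
        moreover have "t \<noteq> t' + (k-1)*d" using b kk(3) by linarith
        moreover have "t + (k-1)*d \<noteq> t' + (k-1)*d" using False by simp
        ultimately
        show ?thesis using t t' kk False
          by (simp add: pair_ind[OF fin])
      qed
      finally show ?thesis using False by simp
    qed
  qed
  also have "\<dots> = real d" by simp
  finally show ?thesis unfolding Z_def .
qed


lemma arr_sum: "real (arrivals \<omega> j a b) = (\<Sum>t\<in>{a<..b}. yind j t \<omega>)"
  unfolding arrivals_def yind_def
  by (simp add: sum.If_cases Int_def conj_commute)

lemma arr_shift: "real (arrivals \<omega> j e (d + e)) = (\<Sum>t\<in>{1..d}. yind j (t + e) \<omega>)"
proof -
  have "{e<..d+e} = {1+e..d+e}" by auto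
  then show ?thesis unfolding arr_sum by (simp only: sum.shift_bounds_cl_nat_ivl)
qed

lemma absq: assumes "r > 0" shows "\<bar>x::real\<bar> \<le> (x^2 / r + r) / 2"
proof -
  have "0 \<le> (\<bar>x\<bar> - r)^2" by simp
  then have "2 * r * \<bar>x\<bar> \<le> x^2 + r^2" by (simp add: power2_eq_square algebra_simps)
  then show ?thesis using assms by (simp add: field_simps power2_eq_square)
qed

lemma D_bound:
  assumes fin: "finite (set_pmf P)" and k: "1 \<le> k" "k \<le> K" and Ks: "K * d = T"
  shows "measure_pmf.expectation (arrival_law P T)
     (\<lambda>\<omega>. real (arrivals \<omega> j ((k-1)*d) (k*d) - arrivals \<omega> j 0 d)) \<le> sqrt d"
proof (cases "k = 1 \<or> d = 0")
  case True
  then have "(\<lambda>\<omega>. real (arrivals \<omega> j ((k-1)*d) (k*d) - arrivals \<omega> j 0 d)) = (\<lambda>_. 0)"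
    by (auto simp: arrivals_def)
  then show ?thesis by simp
next
  case False
  then have k2: "2 \<le> k" and dpos: "d > 0" using k by auto
  have I: "integrable (measure_pmf (arrival_law P T)) f" for f :: "_ \<Rightarrow> real" by (rule integ_law[OF fin])
  define X where "X \<omega> = (\<Sum>t\<in>{1..d}. yind j (t + (k-1)*d) \<omega> - yind j t \<omega>)" for \<omega>
  define r where "r = sqrt d"
  have r: "r > 0" using dpos by (simp add: r_def)
  have pw: "real (arrivals \<omega> j ((k-1)*d) (k*d) - arrivals \<omega> j 0 d) \<le> ((X \<omega>)^2 / r + r) / 2" for \<omega>
  proof -
    have kd: "k * d = d + (k-1)*d" using k by (cases k) auto
    have "real (arrivals \<omega> j ((k-1)*d) (k*d) - arrivals \<omega> j 0 d)
        \<le> \<bar>real (arrivals \<omega> j ((k-1)*d) (k*d)) - real (arrivals \<omega> j 0 d)\<bar>" by (simp add: of_nat_diff)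
    also have "\<dots> = \<bar>X \<omega>\<bar>"
      using arr_shift[of \<omega> j "(k-1)*d" d] arr_shift[of \<omega> j 0 d] unfolding kd X_def
      by (simp add: sum_subtractf)
    also have "\<dots> \<le> ((X \<omega>)^2 / r + r) / 2" by (rule absq[OF r])
    finally show ?thesis .
  qed
  have "measure_pmf.expectation (arrival_law P T)
     (\<lambda>\<omega>. real (arrivals \<omega> j ((k-1)*d) (k*d) - arrivals \<omega> j 0 d))
     \<le> measure_pmf.expectation (arrival_law P T) (\<lambda>\<omega>. ((X \<omega>)^2 / r + r) / 2)"
    by (rule integral_mono[OF I I pw])
  also have "\<dots> = (measure_pmf.expectation (arrival_law P T) (\<lambda>\<omega>. (X \<omega>)^2) / r + r) / 2"
    by (simp add: I)
  also have "\<dots> \<le> (real d / r + r) / 2"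
    using sq_bound[OF fin k2 k(2) Ks, of j] r unfolding X_def
    by (simp add: divide_right_mono)
  also have "\<dots> = r" using r by (simp add: r_def field_simps)
  finally show ?thesis unfolding r_def .
qed



lemma g_step:
  fixes f :: "real \<Rightarrow> real"
  assumes "L-lipschitz_on {0..1} f" "0 \<le> s'" "s' \<le> s" "s \<le> den" "den > 0"
  shows "den * f (s' / den) \<le> den * f (s / den) + L * (s - s')"
proof -
  have a: "s'/den \<in> {0..1}" "s/den \<in> {0..1}" using assms by auto
  have "dist (f (s'/den)) (f (s/den)) \<le> L * dist (s'/den) (s/den)"
    by (rule lipschitz_onD[OF assms(1) a])
  moreover have "s'/den \<le> s/den" using assms by (intro divide_right_mono) auto
  ultimately have "f (s'/den) - f (s/den) \<le> L * ((s - s')/den)"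
    using assms by (simp add: dist_real_def diff_divide_distrib abs_le_iff)
  then have "den * (f (s'/den) - f (s/den)) \<le> den * (L * ((s - s')/den))"
    using assms by (intro mult_left_mono) auto
  moreover have "den * (L * ((s - s')/den)) = L*(s-s')" using assms by simp
  ultimately show ?thesis by (simp add: right_diff_distrib)
qed

lemma obj_compare:
  fixes X X' :: "nat \<Rightarrow> nat \<Rightarrow> nat \<Rightarrow> nat" and L :: real
  assumes le: "\<And>k j i. X' k j i \<le> X k j i"
    and lip: "\<And>k i. k \<in> {1..K} \<Longrightarrow> i < m \<Longrightarrow> L-lipschitz_on {0..1} (g k i)"
    and arg: "\<And>k i. k \<in> {1..K} \<Longrightarrow> i < m \<Longrightarrow>
        real (\<Sum>j<n. \<Sum>k''\<in>{1..k}. X k'' j i) \<le> real k * real T / real K"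
    and K: "K \<ge> 1" and L: "L \<ge> 0"
  shows "alloc_obj n m c K T g X' \<le> alloc_obj n m c K T g X
     + ((\<Sum>j<n. \<Sum>i<m. \<bar>c j i\<bar>) + L * real K) *
       (\<Sum>k\<in>{1..K}. \<Sum>j<n. \<Sum>i<m. (real (X k j i) - real (X' k j i)))"
proof -
  define \<delta> where "\<delta> k j i = real (X k j i) - real (X' k j i)" for k j i
  define \<Delta> where "\<Delta> = (\<Sum>k\<in>{1..K}. \<Sum>j<n. \<Sum>i<m. \<delta> k j i)"
  have \<delta>0: "\<delta> k j i \<ge> 0" for k j i using le[of k j i] by (simp add: \<delta>_def)
  have \<Delta>0: "\<Delta> \<ge> 0" unfolding \<Delta>_def by (intro sum_nonneg) (simp add: \<delta>0)
  have one: "(\<Sum>k\<in>{1..K}. \<delta> k j i) \<le> \<Delta>" if "j < n" "i < m" for j i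
    unfolding \<Delta>_def
  proof (rule sum_mono)
    fix k show "\<delta> k j i \<le> (\<Sum>j<n. \<Sum>i<m. \<delta> k j i)"
    proof -
      have "\<delta> k j i \<le> (\<Sum>i<m. \<delta> k j i)" by (rule member_le_sum) (auto simp: \<delta>0 that)
      also have "\<dots> \<le> (\<Sum>j<n. \<Sum>i<m. \<delta> k j i)"
        by (rule member_le_sum[where f = "\<lambda>j. \<Sum>i<m. \<delta> k j i"]) (auto simp: \<delta>0 that intro!: sum_nonneg)
      finally show ?thesis .
    qed
  qed
  have lin: "(\<Sum>j<n. \<Sum>i<m. c j i * real (\<Sum>k\<in>{1..K}. X' k j i))
      \<le> (\<Sum>j<n. \<Sum>i<m. c j i * real (\<Sum>k\<in>{1..K}. X k j i)) + (\<Sum>j<n. \<Sum>i<m. \<bar>c j i\<bar>) * \<Delta>"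
  proof -
    have "(\<Sum>j<n. \<Sum>i<m. c j i * real (\<Sum>k\<in>{1..K}. X' k j i))
        \<le> (\<Sum>j<n. \<Sum>i<m. c j i * real (\<Sum>k\<in>{1..K}. X k j i) + \<bar>c j i\<bar> * \<Delta>)"
    proof (intro sum_mono)
      fix j i assume j: "j \<in> {..<n}" and i: "i \<in> {..<m}"
      have e: "real (\<Sum>k\<in>{1..K}. X' k j i) = real (\<Sum>k\<in>{1..K}. X k j i) - (\<Sum>k\<in>{1..K}. \<delta> k j i)"
        by (simp add: \<delta>_def sum_subtractf)
      have s0: "0 \<le> (\<Sum>k\<in>{1..K}. \<delta> k j i)" by (intro sum_nonneg) (simp add: \<delta>0)
      have "- (c j i * (\<Sum>k\<in>{1..K}. \<delta> k j i)) \<le> \<bar>c j i\<bar> * (\<Sum>k\<in>{1..K}. \<delta> k j i)"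
        using s0 by (metis abs_ge_minus_self minus_mult_left mult_right_mono)
      also have "\<dots> \<le> \<bar>c j i\<bar> * \<Delta>" using one[of j i] j i by (intro mult_left_mono) auto
      finally show "c j i * real (\<Sum>k\<in>{1..K}. X' k j i) \<le> c j i * real (\<Sum>k\<in>{1..K}. X k j i) + \<bar>c j i\<bar> * \<Delta>"
        unfolding e by (simp add: right_diff_distrib)
    qed
    also have "\<dots> = (\<Sum>j<n. \<Sum>i<m. c j i * real (\<Sum>k\<in>{1..K}. X k j i)) + (\<Sum>j<n. \<Sum>i<m. \<bar>c j i\<bar>) * \<Delta>"
      by (simp add: sum.distrib sum_distrib_right)
    finally show ?thesis .
  qed
  define A where "A Y k i = real (\<Sum>j<n. \<Sum>k''\<in>{1..k}. Y k'' j i)" for Y :: "nat \<Rightarrow> nat \<Rightarrow> nat \<Rightarrow> nat" and k i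
  have AA: "(\<Sum>i<m. A X k i - A X' k i) \<le> \<Delta>" if k: "k \<in> {1..K}" for k
  proof -
    have "(\<Sum>i<m. A X k i - A X' k i) = (\<Sum>i<m. \<Sum>j<n. \<Sum>k''\<in>{1..k}. \<delta> k'' j i)"
      by (simp add: A_def \<delta>_def sum_subtractf)
    also have "\<dots> = (\<Sum>j<n. \<Sum>i<m. \<Sum>k''\<in>{1..k}. \<delta> k'' j i)"
      by (rule sum.swap)
    also have "\<dots> = (\<Sum>j<n. \<Sum>k''\<in>{1..k}. \<Sum>i<m. \<delta> k'' j i)"
      by (intro sum.cong refl sum.swap)
    also have "\<dots> = (\<Sum>k''\<in>{1..k}. \<Sum>j<n. \<Sum>i<m. \<delta> k'' j i)"
      by (rule sum.swap)
    also have "\<dots> \<le> \<Delta>" unfolding \<Delta>_def using k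
      by (intro sum_mono2) (auto intro!: sum_nonneg \<delta>0)
    finally show ?thesis .
  qed
  have gg: "real T / real K * (\<Sum>k\<in>{1..K}. \<Sum>i<m. real k * g k i (A X' k i / (real k * real T / real K)))
     \<le> real T / real K * (\<Sum>k\<in>{1..K}. \<Sum>i<m. real k * g k i (A X k i / (real k * real T / real K)))
       + L * real K * \<Delta>"
  proof (cases "T = 0")
    case True then show ?thesis using L \<Delta>0 by simp
  next
    case False
    have "real T / real K * (\<Sum>k\<in>{1..K}. \<Sum>i<m. real k * g k i (A X' k i / (real k * real T / real K)))
      = (\<Sum>k\<in>{1..K}. \<Sum>i<m. (real k * real T / real K) * g k i (A X' k i / (real k * real T / real K)))"
      by (simp add: sum_distrib_left mult_ac)
    also have "\<dots> \<le> (\<Sum>k\<in>{1..K}. \<Sum>i<m. (real k * real T / real K) * g k i (A X k i / (real k * real T / real K))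
          + L * (A X k i - A X' k i))"
    proof (intro sum_mono)
      fix k i assume k: "k \<in> {1..K}" and i: "i \<in> {..<m}"
      show "(real k * real T / real K) * g k i (A X' k i / (real k * real T / real K))
        \<le> (real k * real T / real K) * g k i (A X k i / (real k * real T / real K)) + L * (A X k i - A X' k i)"
      proof (rule g_step)
        show "L-lipschitz_on {0..1} (g k i)" using lip k i by auto
        show "0 \<le> A X' k i" unfolding A_def by (rule of_nat_0_le_iff)
        show "A X' k i \<le> A X k i" unfolding A_def of_nat_le_iff
          by (intro sum_mono le)
        show "A X k i \<le> real k * real T / real K" using arg k i by (auto simp: A_def)
        show "0 < real k * real T / real K" using k False K by auto
      qed
    qed
    also have "\<dots> = real T / real K * (\<Sum>k\<in>{1..K}. \<Sum>i<m. real k * g k i (A X k i / (real k * real T / real K)))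
        + L * (\<Sum>k\<in>{1..K}. \<Sum>i<m. A X k i - A X' k i)"
      by (simp add: sum.distrib sum_distrib_left mult_ac)
    also have "\<dots> \<le> real T / real K * (\<Sum>k\<in>{1..K}. \<Sum>i<m. real k * g k i (A X k i / (real k * real T / real K)))
        + L * (\<Sum>k\<in>{1..K}. \<Delta>)"
      using AA L by (intro add_left_mono mult_left_mono sum_mono) auto
    also have "\<dots> = real T / real K * (\<Sum>k\<in>{1..K}. \<Sum>i<m. real k * g k i (A X k i / (real k * real T / real K)))
       + L * real K * \<Delta>" by simp
    finally show ?thesis .
  qed
  show ?thesis
    using lin gg unfolding alloc_obj_def A_def \<Delta>_def[symmetric] \<delta>_def[symmetric]
    by (simp add: distrib_right)
qed



lemma trunc_sum: fixes x :: "nat \<Rightarrow> nat" and m :: nat shows "(\<Sum>i<m. min (x i) (b - (\<Sum>i'<i. x i'))) = min (\<Sum>i<m. x i) (b::nat)"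
  by (induction m) (auto simp: min_def)

lemma arr_total: "(\<Sum>j<n. arrivals \<omega> j a b) \<le> b - a"
proof -
  have "real (\<Sum>j<n. arrivals \<omega> j a b) = (\<Sum>j<n. \<Sum>t\<in>{a<..b}. yind j t \<omega>)"
    by (simp add: arr_sum)
  also have "\<dots> = (\<Sum>t\<in>{a<..b}. \<Sum>j<n. yind j t \<omega>)" by (rule sum.swap)
  also have "\<dots> \<le> (\<Sum>t\<in>{a<..b}. 1)"
  proof (rule sum_mono)
    fix t
    have "(\<Sum>j<n. yind j t \<omega>) = (if \<omega> t \<in> {..<n} then 1 else 0)"
      unfolding yind_def by (simp add: sum.delta eq_commute[of "\<omega> t"])
    then show "(\<Sum>j<n. yind j t \<omega>) \<le> 1" by simp
  qed
  also have "\<dots> = real (b - a)" by simp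
  finally show ?thesis by linarith
qed

lemma fin_feas: "finite {X. supp_ok n m S K X \<and> (\<forall>k\<in>{1..K}. \<forall>j<n. (\<Sum>i<m. X k j i) \<le> b k j)}"
  (is "finite ?F")
proof -
  define A where "A = {1..K} \<times> {..<n} \<times> {..<m}"
  define B where "B = (\<Union>k\<in>{1..K}. \<Union>j\<in>{..<n}. {0..b k j})"
  define h where "h X = (\<lambda>(k,j,i). X k j i)" for X :: "nat \<Rightarrow> nat \<Rightarrow> nat \<Rightarrow> nat"
  have inj: "inj_on h ?F"
  proof (rule inj_onI)
    fix X Y assume "h X = h Y"
    then have "X k j i = Y k j i" for k j i unfolding h_def by (metis case_prod_conv)
    then show "X = Y" by (intro ext)
  qed
  have P1: "h X x \<in> B" if X: "X \<in> ?F" and x: "x \<in> A" for X x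
  proof -
    obtain k j i where kji: "x = (k,j,i)" "k \<in> {1..K}" "j < n" "i < m" using x unfolding A_def by auto
    have "X k j i \<le> (\<Sum>i<m. X k j i)" by (rule member_le_sum) (auto simp: kji)
    also have "\<dots> \<le> b k j" using X kji by auto
    finally have "X k j i \<le> b k j" .
    moreover have "h X x = X k j i" unfolding h_def kji by simp
    ultimately show "h X x \<in> B" unfolding B_def using kji by auto
  qed
  have P2: "h X x = 0" if X: "X \<in> ?F" and x: "x \<notin> A" for X x
  proof -
    obtain k j i where kji: "x = (k,j,i)" by (cases x) auto
    show "h X x = 0" using X x unfolding supp_ok_def A_def h_def kji by auto
  qed
  have "h ` ?F \<subseteq> {f. \<forall>x. (x \<in> A \<longrightarrow> f x \<in> B) \<and> (x \<notin> A \<longrightarrow> f x = 0)}"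
  proof (rule image_subsetI)
    fix X assume "X \<in> ?F"
    then show "h X \<in> {f. \<forall>x. (x \<in> A \<longrightarrow> f x \<in> B) \<and> (x \<notin> A \<longrightarrow> f x = 0)}"
      using P1[of X] P2[of X] by (simp only: mem_Collect_eq) blast
  qed
  moreover have "finite {f. \<forall>x. (x \<in> A \<longrightarrow> f x \<in> B) \<and> (x \<notin> A \<longrightarrow> f x = 0)}"
    by (rule finite_set_of_finite_funs) (auto simp: A_def B_def)
  ultimately have "finite (h ` ?F)" by (rule finite_subset)
  then show ?thesis using inj by (rule finite_imageD)
qed


lemma det_main:
  fixes L :: real
  assumes K: "K \<ge> 1" and dvd: "K dvd T" and L: "L \<ge> 0"
    and lip: "\<And>k i. k \<in> {1..K} \<Longrightarrow> i < m \<Longrightarrow> L-lipschitz_on {0..1} (g k i)"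
  shows "V_proxy1 n m c S K T g \<omega> \<le> V_off n m c S K T g \<omega>
     + ((\<Sum>j<n. \<Sum>i<m. \<bar>c j i\<bar>) + L * real K) *
       (\<Sum>k\<in>{1..K}. \<Sum>j<n. real (arrivals \<omega> j ((k-1)*(T div K)) (k*(T div K)) - arrivals \<omega> j 0 (T div K)))"
proof -
  define d where "d = T div K"
  have Kd: "K * d = T" using dvd by (simp add: d_def)
  define Foff where "Foff = {X. supp_ok n m S K X \<and>
      (\<forall>k\<in>{1..K}. \<forall>j<n. (\<Sum>i<m. X k j i) \<le> arrivals \<omega> j ((k - 1) * d) (k * d))}"
  define Fpr where "Fpr = {X. supp_ok n m S K X \<and>
      (\<forall>k\<in>{1..K}. \<forall>j<n. (\<Sum>i<m. X k j i) \<le> arrivals \<omega> j 0 d)}"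
  let ?obj = "alloc_obj n m c K T g"
  have finoff: "finite Foff" unfolding Foff_def by (rule fin_feas)
  have finpr: "finite Fpr" unfolding Fpr_def by (rule fin_feas)
  have "(\<lambda>_ _ _. 0) \<in> Foff" by (simp add: Foff_def supp_ok_def)
  then have ne: "?obj ` Foff \<noteq> {}" by blast
  have "V_off n m c S K T g \<omega> = Inf (?obj ` Foff)" by (simp add: V_off_def Foff_def d_def)
  also have "\<dots> \<in> ?obj ` Foff" using finoff ne by (simp add: cInf_eq_Min Min_in)
  finally obtain X where X: "X \<in> Foff" and VX: "V_off n m c S K T g \<omega> = ?obj X" by blast
  define B where "B j = arrivals \<omega> j 0 d" for j
  define X' where "X' k j i = min (X k j i) (B j - (\<Sum>i'<i. X k j i'))" for k j i
  have le: "X' k j i \<le> X k j i" for k j i by (simp add: X'_def)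
  have sumX': "(\<Sum>i<m. X' k j i) = min (\<Sum>i<m. X k j i) (B j)" for k j
    unfolding X'_def by (rule trunc_sum)
  have X'F: "X' \<in> Fpr"
  proof -
    have sX: "supp_ok n m S K X" using X unfolding Foff_def by blast
    have "supp_ok n m S K X'" unfolding supp_ok_def
    proof (intro allI impI)
      fix k j i assume "X' k j i \<noteq> 0"
      then have "X k j i \<noteq> 0" using le[of k j i] by linarith
      then show "k \<in> {1..K} \<and> j < n \<and> i < m \<and> i \<in> S j" using sX unfolding supp_ok_def by blast
    qed
    moreover have "(\<Sum>i<m. X' k j i) \<le> arrivals \<omega> j 0 d" for k j
      unfolding sumX' B_def by simp
    ultimately show ?thesis unfolding Fpr_def by blast
  qed
  have "V_proxy1 n m c S K T g \<omega> = Inf (?obj ` Fpr)" by (simp add: V_proxy1_def Fpr_def d_def)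
  also have "\<dots> \<le> ?obj X'"
    by (rule cInf_lower) (use X'F finpr in auto)
  finally have V1: "V_proxy1 n m c S K T g \<omega> \<le> ?obj X'" .
  have arg: "real (\<Sum>j<n. \<Sum>k''\<in>{1..k}. X k'' j i) \<le> real k * real T / real K"
    if k: "k \<in> {1..K}" and i: "i < m" for k i
  proof -
    have "(\<Sum>j<n. \<Sum>k''\<in>{1..k}. X k'' j i) \<le> (\<Sum>j<n. \<Sum>k''\<in>{1..k}. \<Sum>i'<m. X k'' j i')"
      using i by (intro sum_mono member_le_sum) auto
    also have "\<dots> = (\<Sum>k''\<in>{1..k}. \<Sum>j<n. \<Sum>i'<m. X k'' j i')" by (rule sum.swap)
    also have "\<dots> \<le> (\<Sum>k''\<in>{1..k}. \<Sum>j<n. arrivals \<omega> j ((k'' - 1) * d) (k'' * d))"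
      using X k unfolding Foff_def by (intro sum_mono) auto
    also have "\<dots> \<le> (\<Sum>k''\<in>{1..k}. d)"
    proof (rule sum_mono)
      fix k'' assume k'': "k'' \<in> {1..k}"
      have "k'' * d - (k'' - 1) * d = d" using k'' by (cases k'') (auto)
      then show "(\<Sum>j<n. arrivals \<omega> j ((k'' - 1) * d) (k'' * d)) \<le> d"
        using arr_total[where n=n and \<omega>=\<omega> and a="(k'' - 1) * d" and b="k'' * d"] by simp
    qed
    also have "\<dots> = k * d" by simp
    finally have "real (\<Sum>j<n. \<Sum>k''\<in>{1..k}. X k'' j i) \<le> real (k * d)" by linarith
    also have "real (k * d) = real k * real T / real K" using Kd K by (auto simp: field_simps)
    finally show ?thesis .
  qed
  have oc: "?obj X' \<le> ?obj X + ((\<Sum>j<n. \<Sum>i<m. \<bar>c j i\<bar>) + L * real K) *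
       (\<Sum>k\<in>{1..K}. \<Sum>j<n. \<Sum>i<m. (real (X k j i) - real (X' k j i)))"
    by (rule obj_compare[OF le lip arg K L])
  have \<Delta>: "(\<Sum>k\<in>{1..K}. \<Sum>j<n. \<Sum>i<m. (real (X k j i) - real (X' k j i)))
     \<le> (\<Sum>k\<in>{1..K}. \<Sum>j<n. real (arrivals \<omega> j ((k-1)*d) (k*d) - arrivals \<omega> j 0 d))"
  proof (intro sum_mono)
    have gen: "real s - real (min s b) \<le> real (a - b)" if "s \<le> a" for s a b :: nat
      using that by (simp add: min_def of_nat_diff)
    fix k j assume k: "k \<in> {1..K}" and j: "j \<in> {..<n}"
    have S: "(\<Sum>i<m. X k j i) \<le> arrivals \<omega> j ((k-1)*d) (k*d)" using X k j unfolding Foff_def by auto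
    have "(\<Sum>i<m. (real (X k j i) - real (X' k j i))) = real (\<Sum>i<m. X k j i) - real (min (\<Sum>i<m. X k j i) (B j))"
      by (simp add: sum_subtractf sumX'[symmetric])
    also have "\<dots> \<le> real (arrivals \<omega> j ((k-1)*d) (k*d) - arrivals \<omega> j 0 d)"
      using S unfolding B_def by (rule gen)
    finally show "(\<Sum>i<m. (real (X k j i) - real (X' k j i))) \<le> real (arrivals \<omega> j ((k-1)*d) (k*d) - arrivals \<omega> j 0 d)" .
  qed
  have C0: "0 \<le> (\<Sum>j<n. \<Sum>i<m. \<bar>c j i\<bar>) + L * real K"
    using L by (intro add_nonneg_nonneg sum_nonneg mult_nonneg_nonneg) auto
  show ?thesis
    using V1 oc VX mult_left_mono[OF \<Delta> C0] unfolding d_def by linarith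
qed



theorem lemma3:
  fixes n m :: nat and c :: "nat \<Rightarrow> nat \<Rightarrow> real" and S :: "nat \<Rightarrow> nat set"
    and L :: real and P :: "nat pmf"
  assumes "set_pmf P \<subseteq> {..<n}" and "L \<ge> 0"
  shows "\<exists>C. \<forall>K T (\<rho> :: nat \<Rightarrow> nat \<Rightarrow> real) (g :: nat \<Rightarrow> nat \<Rightarrow> real \<Rightarrow> real).
     K \<ge> 1 \<longrightarrow> K dvd T \<longrightarrow>
     (\<forall>k\<in>{1..K}. \<forall>i<m. \<rho> k i \<in> {0..1} \<and> convex_on {0..1} (g k i)
        \<and> L-lipschitz_on {0..1} (g k i) \<and> (\<forall>x\<in>{0..1}. g k i x \<ge> 0) \<and> g k i (\<rho> k i) = 0) \<longrightarrow>
     measure_pmf.expectation (arrival_law P T) (V_proxy1 n m c S K T g)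
       \<le> measure_pmf.expectation (arrival_law P T) (V_off n m c S K T g)
          + C * real K powr (3/2) * sqrt (real T)"
proof -
  define Cc where "Cc = (\<Sum>j<n. \<Sum>i<m. \<bar>c j i\<bar>)"
  have Cc0: "Cc \<ge> 0" unfolding Cc_def by (intro sum_nonneg) auto
  have fin: "finite (set_pmf P)" using assms(1) finite_subset by blast
  show ?thesis
  proof (intro exI[of _ "(Cc + L) * real n"] allI impI)
    fix K T :: nat and \<rho> :: "nat \<Rightarrow> nat \<Rightarrow> real" and g :: "nat \<Rightarrow> nat \<Rightarrow> real \<Rightarrow> real"
    assume K: "K \<ge> 1" and dvd: "K dvd T" and conds: "\<forall>k\<in>{1..K}. \<forall>i<m. \<rho> k i \<in> {0..1} \<and> convex_on {0..1} (g k i)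
        \<and> L-lipschitz_on {0..1} (g k i) \<and> (\<forall>x\<in>{0..1}. g k i x \<ge> 0) \<and> g k i (\<rho> k i) = 0"
    define d where "d = T div K"
    have Kd: "K * d = T" using dvd by (simp add: d_def)
    let ?M = "arrival_law P T"
    have I: "integrable (measure_pmf ?M) f" for f :: "_ \<Rightarrow> real" by (rule integ_law[OF fin])
    define Cst where "Cst = Cc + L * real K"
    have Cst0: "Cst \<ge> 0" unfolding Cst_def using Cc0 assms(2) by simp
    define D where "D \<omega> = (\<Sum>k\<in>{1..K}. \<Sum>j<n. real (arrivals \<omega> j ((k-1)*d) (k*d) - arrivals \<omega> j 0 d))" for \<omega>
    have lip: "\<And>k i. k \<in> {1..K} \<Longrightarrow> i < m \<Longrightarrow> L-lipschitz_on {0..1} (g k i)" using conds by blast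
    have pw: "V_proxy1 n m c S K T g \<omega> \<le> V_off n m c S K T g \<omega> + Cst * D \<omega>" for \<omega>
      using det_main[where n=n and c=c and S=S and \<omega>=\<omega>, OF K dvd assms(2) lip] unfolding Cst_def Cc_def D_def d_def .
    have "measure_pmf.expectation ?M (V_proxy1 n m c S K T g)
        \<le> measure_pmf.expectation ?M (\<lambda>\<omega>. V_off n m c S K T g \<omega> + Cst * D \<omega>)"
      by (rule integral_mono[OF I I pw])
    also have "\<dots> = measure_pmf.expectation ?M (V_off n m c S K T g) + Cst * measure_pmf.expectation ?M D"
      by (simp add: I)
    also have "measure_pmf.expectation ?M D = (\<Sum>k\<in>{1..K}. \<Sum>j<n.
        measure_pmf.expectation ?M (\<lambda>\<omega>. real (arrivals \<omega> j ((k-1)*d) (k*d) - arrivals \<omega> j 0 d)))"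
      unfolding D_def by (simp add: Bochner_Integration.integral_sum I)
    also have "\<dots> \<le> (\<Sum>k\<in>{1..K}. \<Sum>j<n. sqrt (real d))"
      using D_bound[OF fin _ _ Kd] by (intro sum_mono) auto
    also have "\<dots> = real K * real n * sqrt (real d)" by simp
    finally have E: "measure_pmf.expectation ?M (V_proxy1 n m c S K T g)
        \<le> measure_pmf.expectation ?M (V_off n m c S K T g) + Cst * (real K * real n * sqrt (real d))"
      using Cst0 by (simp add: mult_left_mono)
    have Kpos: "real K > 0" using K by simp
    have Td: "real T = real K * real d" using Kd by (metis of_nat_mult)
    have sKK: "sqrt (real K) * sqrt (real K) = real K" by simp
    have sd: "sqrt (real T) = sqrt (real K) * sqrt (real d)" unfolding Td by (simp add: real_sqrt_mult)
    have Kp: "real K powr (3/2) = real K * sqrt (real K)"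
    proof -
      have "real K powr (1 + 1/2) = real K powr 1 * real K powr (1/2)" by (rule powr_add)
      then show ?thesis using Kpos by (simp add: powr_half_sqrt)
    qed
    have CstK: "Cst \<le> (Cc + L) * real K"
    proof -
      have "Cc * 1 \<le> Cc * real K" using K Cc0 by (intro mult_left_mono) auto
      then show ?thesis unfolding Cst_def by (simp add: distrib_right)
    qed
    have nn: "0 \<le> real K * real n * sqrt (real d)" by simp
    have "Cst * (real K * real n * sqrt (real d)) \<le> (Cc + L) * real K * (real K * real n * sqrt (real d))"
      by (rule mult_right_mono[OF CstK nn])
    also have "\<dots> = (Cc + L) * real n * (real K * (sqrt (real K) * sqrt (real K))) * sqrt (real d)"
      unfolding sKK by (simp add: mult_ac)
    also have "\<dots> = (Cc + L) * real n * (real K * sqrt (real K)) * (sqrt (real K) * sqrt (real d))"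
      by (simp add: mult_ac)
    also have "\<dots> = (Cc + L) * real n * real K powr (3/2) * sqrt (real T)"
      unfolding Kp sd ..
    finally show "measure_pmf.expectation ?M (V_proxy1 n m c S K T g)
       \<le> measure_pmf.expectation ?M (V_off n m c S K T g) + (Cc + L) * real n * real K powr (3/2) * sqrt (real T)"
      using E by linarith
  qed
qed


end
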